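(* Let $n,k,d\in\mathbb{N}$ with $n\ge k\ge d$. Then every symmetric polynomial $f=\sum_{\ell=0}^d\alpha_\ell f_\ell$ on $\{-1,1\}^n$ (with $\alpha_0,\dots,\alpha_d\in\mathbb{R}$) satisfies $$\inf_{g\in \mathscr{P}_{>k}^n} \|f-g\|_1 \leq \sum_{\ell=0}^d |\alpha _\ell|\, | \tilde{c}(k,\ell)|.$$
   Context: For $\ell\ge1$, $f_\ell(x)=\sum_{S\subseteq\{1,\dots,n\},|S|=\ell}\prod_{i\in S}x_i$ is the $\ell$-th elementary symmetric multilinear polynomial on $\{-1,1\}^n$, and $f_0\equiv1$. Every $g:\{-1,1\}^n\to\mathbb{R}$ has a unique expansion $g=\sum_S\widehat g(S)w_S$ with $w_S(x)=\prod_{i\in S}x_i$, and $\mathscr{P}^n_{>k}=\{g:\ \widehat g(S)=0\text{ whenever }|S|\le k\}$. $\|\cdot\|_1$ is the $L_1$ norm with respect to the uniform probability measure on $\{-1,1\}^n$. Let $T_k(x)=\sum_{\ell=0}^k c(k,\ell)x^\ell$ be the $k$-th Chebyshev polynomial of the first kind, $T_k(\cos\theta)=\cos(k\theta)$ (with $c(k,\ell)=0$ for $\ell>k$). Define $\tilde c(k,\ell)=c(k,\ell)$ if $k-\ell$ is even and $\tilde c(k,\ell)=c(k-1,\ell)$ if $k-\ell$ is odd. *)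

theory Defs
  imports "HOL-Library.FuncSet" "HOL-Computational_Algebra.Polynomial"
begin

definition cube :: "nat \<Rightarrow> (nat \<Rightarrow> real) set" where
  "cube n = PiE {0..<n} (\<lambda>_. {-1, 1})"

definition walsh :: "nat set \<Rightarrow> (nat \<Rightarrow> real) \<Rightarrow> real" where
  "walsh S x = (\<Prod>i\<in>S. x i)"

definition esym :: "nat \<Rightarrow> nat \<Rightarrow> (nat \<Rightarrow> real) \<Rightarrow> real" where
  "esym n l x = (if l = 0 then 1 else (\<Sum>S\<in>{S. S \<subseteq> {0..<n} \<and> card S = l}. walsh S x))"

definition Pgt :: "nat \<Rightarrow> nat \<Rightarrow> ((nat \<Rightarrow> real) \<Rightarrow> real) set" where
  "Pgt n k = {g. \<exists>a :: nat set \<Rightarrow> real. \<forall>x\<in>cube n.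
      g x = (\<Sum>S\<in>{S. S \<subseteq> {0..<n} \<and> k < card S}. a S * walsh S x)}"

definition L1norm :: "nat \<Rightarrow> ((nat \<Rightarrow> real) \<Rightarrow> real) \<Rightarrow> real" where
  "L1norm n h = (\<Sum>x\<in>cube n. \<bar>h x\<bar>) / 2 ^ n"

fun cheb :: "nat \<Rightarrow> real poly" where
  "cheb 0 = 1"
| "cheb (Suc 0) = [:0, 1:]"
| "cheb (Suc (Suc m)) = [:0, 2:] * cheb (Suc m) - cheb m"

definition cheb_coeff :: "nat \<Rightarrow> nat \<Rightarrow> real" where
  "cheb_coeff k l = coeff (cheb k) l"

definition cheb_coeff_tilde :: "nat \<Rightarrow> nat \<Rightarrow> real" where
  "cheb_coeff_tilde k l = (if even (k - l) then cheb_coeff k l else cheb_coeff (k - 1) l)"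

end

theory Submission
  imports Defs
begin

lemma cos_rec_aux: "cos ((y::real) + x) = 2 * cos x * cos y - cos (y - x)"
  by (simp add: cos_add cos_diff algebra_simps)

lemma cheb_cos: "poly (cheb k) (cos x) = cos (real k * x)"
proof (induction k rule: cheb.induct)
  case 1 then show ?case by simp
next
  case 2 then show ?case by simp
next
  case (3 m)
  have a: "real (Suc (Suc m)) * x = real (Suc m) * x + x" by (simp add: algebra_simps)
  have b: "real m * x = real (Suc m) * x - x" by (simp add: algebra_simps)
  have "cos (real (Suc (Suc m)) * x) = 2 * cos x * cos (real (Suc m) * x) - cos (real m * x)"
    unfolding a b by (rule cos_rec_aux)
  then show ?case using 3 by simp
qed

lemma cheb_degree: "degree (cheb k) \<le> k"
proof (induction k rule: cheb.induct)
  case 1 then show ?case by simp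
next
  case 2 then show ?case by simp
next
  case (3 m)
  have "degree ([:0, 2:] * cheb (Suc m)) \<le> degree [:0, 2::real:] + degree (cheb (Suc m))"
    by (rule degree_mult_le)
  also have "\<dots> \<le> Suc (Suc m)" using "3.IH"(1) by simp
  finally have "degree ([:0, 2:] * cheb (Suc m)) \<le> Suc (Suc m)" .
  moreover have "degree (cheb m) \<le> Suc (Suc m)" using 3 by simp
  ultimately show ?case by (simp add: degree_diff_le)
qed


definition lag :: "(nat \<Rightarrow> real) \<Rightarrow> nat \<Rightarrow> nat \<Rightarrow> real poly" where
  "lag t k j = smult (1 / (\<Prod>i\<in>{..k}-{j}. (t j - t i))) (\<Prod>i\<in>{..k}-{j}. [:- t i, 1:])"

lemma poly_lag: "poly (lag t k j) x = (\<Prod>i\<in>{..k}-{j}. (x - t i)) / (\<Prod>i\<in>{..k}-{j}. (t j - t i))"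
  by (simp add: lag_def poly_prod)

lemma poly_lag_node:
  assumes inj: "inj_on t {..k}" and j: "j \<le> k" and i: "i \<le> k"
  shows "poly (lag t k j) (t i) = (if i = j then 1 else 0)"
proof (cases "i = j")
  case True
  have "(\<Prod>i\<in>{..k}-{j}. (t j - t i)) \<noteq> 0"
    using inj j by (auto simp: inj_on_def)
  then show ?thesis using True by (simp add: poly_lag)
next
  case False
  have "(\<Prod>i'\<in>{..k}-{j}. (t i - t i')) = 0"
    using i False by (intro prod_zero) auto
  then show ?thesis using False by (simp add: poly_lag)
qed

lemma degree_lag: assumes "j \<le> k" shows "degree (lag t k j) \<le> k"
proof -
  have "degree (\<Prod>i\<in>{..k}-{j}. [:- t i, 1:]) \<le> (\<Sum>i\<in>{..k}-{j}. degree [:- t i, 1:])"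
    using degree_prod_sum_le[of "{..k}-{j}" "\<lambda>i. [:- t i, 1:]"] by (simp add: o_def)
  also have "\<dots> = card ({..k}-{j})" by simp
  also have "\<dots> \<le> k" using \<open>j \<le> k\<close> by (auto simp: card_Diff_singleton)
  finally show ?thesis by (simp add: lag_def)
qed

lemma interp:
  assumes inj: "inj_on t {..k}" and dp: "degree p \<le> k"
  shows "p = (\<Sum>j\<le>k. smult (poly p (t j)) (lag t k j))"
proof (rule ccontr)
  define r where "r = p - (\<Sum>j\<le>k. smult (poly p (t j)) (lag t k j))"
  assume "\<not> ?thesis"
  then have r0: "r \<noteq> 0" by (simp add: r_def)
  have "degree (\<Sum>j\<le>k. smult (poly p (t j)) (lag t k j)) \<le> k"
    by (rule degree_sum_le) (simp, meson atMost_iff degree_lag degree_smult_le order_trans)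
  then have dr: "degree r \<le> k" using dp unfolding r_def by (simp add: degree_diff_le)
  have roots: "poly r (t i) = 0" if "i \<le> k" for i
  proof -
    have "poly (\<Sum>j\<le>k. smult (poly p (t j)) (lag t k j)) (t i)
          = (\<Sum>j\<le>k. poly p (t j) * (if i = j then 1 else 0))"
      by (simp add: poly_sum poly_lag_node[OF inj _ that])
    also have "\<dots> = poly p (t i)" using that by (simp add: if_distrib cong: if_cong)
    finally show ?thesis by (simp add: r_def)
  qed
  have "t ` {..k} \<subseteq> {x. poly r x = 0}" using roots by auto
  then have "card (t ` {..k}) \<le> card {x. poly r x = 0}"
    by (intro card_mono poly_roots_finite r0)
  also have "\<dots> \<le> degree r" by (rule card_poly_roots_bound[OF r0])
  finally have "Suc k \<le> k" using dr card_image[OF inj] by simp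
  then show False by simp
qed


lemma coeff_quad: "coeff (Q * [:-a,0,1:]) n = (if 2 \<le> n then coeff Q (n-2) else 0) - a * coeff (Q::real poly) n"
proof -
  have "Q * [:-a,0,1:] = smult (-a) Q + pCons 0 (pCons 0 Q)"
    by (simp add: mult_pCons_right)
  note * = this
  show ?thesis
  proof (cases n)
    case 0 then show ?thesis using * by simp
  next
    case (Suc n') then show ?thesis using * by (cases n') auto
  qed
qed

lemma degree_prod_quad: "degree (\<Prod>j<m. [:-a j,0,1::real:]) = 2 * m"
proof -
  have "degree (\<Prod>j<m. [:-a j,0,1::real:]) = (\<Sum>j<m. degree [:-a j,0,1::real:])"
    by (rule degree_prod_eq_sum_degree) auto
  then show ?thesis by simp
qed

lemma coeff_prod_quad_sign:
  assumes "\<forall>j<m. a j > (0::real)"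
  shows "\<forall>u\<le>m. (-1)^(m-u) * coeff (\<Prod>j<m. [:-a j,0,1:]) (2*u) > 0"
  using assms
proof (induction m)
  case 0 then show ?case by simp
next
  case (Suc m)
  define Q where "Q = (\<Prod>j<m. [:-a j,0,1::real:])"
  have IH: "\<And>u. u \<le> m \<Longrightarrow> (-1)^(m-u) * coeff Q (2*u) > 0" using Suc by (simp add: Q_def)
  have dQ: "degree Q = 2 * m" by (simp add: Q_def degree_prod_quad)
  have am: "a m > 0" using Suc.prems by simp
  have P: "(\<Prod>j<Suc m. [:-a j,0,1::real:]) = Q * [:-a m,0,1:]" by (simp add: Q_def)
  show ?case
  proof (intro allI impI)
    fix u assume u: "u \<le> Suc m"
    have c: "coeff (Q * [:-a m,0,1:]) (2*u) = (if 1 \<le> u then coeff Q (2*(u-1)) else 0) - a m * coeff Q (2*u)"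
      unfolding coeff_quad by (cases u) auto
    consider "u = 0" | "1 \<le> u" "u \<le> m" | "u = Suc m" using u by linarith
    then show "(-1)^(Suc m-u) * coeff (\<Prod>j<Suc m. [:-a j,0,1:]) (2*u) > 0"
    proof cases
      case 1
      have "(-1)^(Suc m-u) * coeff (Q * [:-a m,0,1:]) (2*u) = a m * ((-1)^(m-0) * coeff Q (2*0))"
        using 1 c by simp
      then show ?thesis using IH[of 0] am P by simp
    next
      case 2
      have e: "Suc m - u = Suc (m - u)" "m - (u - 1) = Suc (m - u)" using 2 by auto
      have "(-1)^(Suc m-u) * coeff (Q * [:-a m,0,1:]) (2*u)
          = (-1)^(m-(u-1)) * coeff Q (2*(u-1)) + a m * ((-1)^(m-u) * coeff Q (2*u))"
        using 2 c unfolding e by (simp add: algebra_simps)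
      moreover have "(-1)^(m-(u-1)) * coeff Q (2*(u-1)) > 0" by (rule IH) (use 2 in simp)
      moreover have "a m * ((-1)^(m-u) * coeff Q (2*u)) > 0" using IH 2 am by simp
      ultimately show ?thesis using P by simp
    next
      case 3
      have "coeff Q (2 * Suc m) = 0" using dQ by (simp add: coeff_eq_0)
      then have "(-1)^(Suc m-u) * coeff (Q * [:-a m,0,1:]) (2*u) = (-1)^(m-m) * coeff Q (2*m)"
        using 3 c by simp
      then show ?thesis using IH[of m] P by simp
    qed
  qed
qed

lemma factor_pairs:
  fixes p :: "real poly" and m :: nat
  assumes "\<forall>i<m. y i > 0" "inj_on y {..<m}" "\<forall>i<m. poly p (y i) = 0 \<and> poly p (- y i) = 0"
  shows "(\<Prod>i<m. [: - ((y i)^2), 0, 1:]) dvd p"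
  using assms
proof (induction m)
  case 0 then show ?case by simp
next
  case (Suc m)
  define Q where "Q = (\<Prod>i<m. [: - ((y i)^2), 0, 1::real:])"
  have "Q dvd p" using Suc by (simp add: Q_def inj_on_def)
  then obtain h where h: "p = Q * h" by blast
  have ym: "y m > 0" using Suc.prems by simp
  have Qy: "poly Q (y m) \<noteq> 0" "poly Q (- y m) \<noteq> 0"
  proof -
    have ne: "y m \<noteq> y i" if "i < m" for i
    proof
      assume "y m = y i"
      then have "m = i" using Suc.prems(2) that by (auto simp: inj_on_def)
      then show False using that by simp
    qed
    have "(y m)^2 \<noteq> (y i)^2" if "i < m" for i
    proof
      assume "(y m)^2 = (y i)^2"
      then have "y m = y i" using ym Suc.prems(1) that
        by (metis less_Suc_eq power2_eq_iff_nonneg less_imp_le)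
      then show False using ne that by simp
    qed
    note * = this
    show "poly Q (y m) \<noteq> 0" "poly Q (- y m) \<noteq> 0"
    proof -
      have pq: "poly Q x = (\<Prod>i<m. x^2 - (y i)^2)" for x
        by (simp add: Q_def poly_prod power2_eq_square)
      from * show "poly Q (y m) \<noteq> 0" "poly Q (- y m) \<noteq> 0"
        unfolding pq by auto
    qed
  qed
  have h1: "poly h (y m) = 0" "poly h (- y m) = 0"
    using Suc.prems(3) Qy h by (auto simp: poly_mult)
  then obtain h2 where h2: "h = [:- y m, 1:] * h2" using poly_eq_0_iff_dvd by blast
  have "poly h2 (- y m) = 0" using h1 h2 ym by (simp add: poly_mult)
  then obtain h3 where h3: "h2 = [:- (- y m), 1:] * h3" using poly_eq_0_iff_dvd by blast
  have "[:- y m, 1:] * [:- (- y m), 1:] = [: - ((y m)^2), 0, 1::real:]"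
    by (simp add: power2_eq_square)
  then have "p = (Q * [: - ((y m)^2), 0, 1:]) * h3" using h h2 h3 by (simp add: algebra_simps)
  then show ?case by (simp add: Q_def)
qed


definition nd :: "nat \<Rightarrow> nat \<Rightarrow> real" where
  "nd k j = cos (real j * pi / real k)"

lemma nd_mono:
  assumes "1 \<le> k" "i < j" "j \<le> k"
  shows "nd k j < nd k i"
proof -
  have k: "real k > 0" using assms by simp
  have "real i * pi / real k < real j * pi / real k"
    using assms k by (simp add: divide_strict_right_mono)
  moreover have "real j * pi / real k \<le> pi"
    using assms k by (simp add: field_simps)
  moreover have "0 \<le> real i * pi / real k" using k by simp
  ultimately show ?thesis unfolding nd_def by (intro cos_monotone_0_pi) auto
qed

lemma nd_inj: "1 \<le> k \<Longrightarrow> inj_on (nd k) {..k}"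
  unfolding inj_on_def
  by (metis atMost_iff linorder_neqE_nat nd_mono order_less_irrefl)

lemma nd_sym:
  assumes "1 \<le> k" "j \<le> k" shows "nd k (k - j) = - nd k j"
proof -
  have "real (k - j) * pi / real k = pi - real j * pi / real k"
    using assms by (simp add: of_nat_diff field_simps)
  then show ?thesis unfolding nd_def by simp
qed

lemma cheb_nd: "1 \<le> k \<Longrightarrow> poly (cheb k) (nd k j) = (-1)^j"
  unfolding nd_def cheb_cos by simp

lemma nd_abs: "\<bar>nd k j\<bar> \<le> 1" unfolding nd_def by simp

lemma nd_nonneg:
  assumes "1 \<le> k" "2 * j \<le> k" shows "0 \<le> nd k j"
proof -
  have k: "real k > 0" using assms by simp
  have "real j * pi / real k \<le> pi / 2"
    using assms k by (simp add: field_simps)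
  moreover have "0 \<le> real j * pi / real k" using k by simp
  moreover have "- (pi/2) \<le> 0" by simp
  ultimately show ?thesis unfolding nd_def by (intro cos_ge_zero) linarith+
qed

lemma final_coeff:
  fixes qe h :: "real poly" and y :: "nat \<Rightarrow> real"
  assumes y: "\<forall>j<m. y j > 0"
    and qe: "qe = (\<Prod>j<m. [: - ((y j)^2), 0, 1:]) * (monom 1 e * h)"
    and dq: "degree qe \<le> 2 * m + e" and q0: "qe \<noteq> 0" and u: "u \<le> m"
  shows "coeff qe (2 * u + e) \<noteq> 0"
proof -
  define Q where "Q = (\<Prod>j<m. [: - ((y j)^2), 0, 1::real:])"
  have sg: "(-1)^(m-u) * coeff Q (2*u) > 0"
  proof -
    have "\<forall>j<m. (y j)^2 > 0" using y by (intro allI impI zero_less_power) auto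
    from coeff_prod_quad_sign[OF this] u show ?thesis by (simp add: Q_def)
  qed
  have dQ: "degree Q = 2 * m" unfolding Q_def by (rule degree_prod_quad)
  have Q0: "Q \<noteq> 0" using sg by auto
  have h0: "h \<noteq> 0" using q0 qe by auto
  have "degree qe = 2 * m + (e + degree h)"
    using Q0 h0 unfolding qe Q_def[symmetric] dQ[symmetric]
    by (simp add: degree_mult_eq degree_monom_eq)
  then have "degree h = 0" using dq by simp
  then obtain c where hc: "h = [:c:]" by (metis degree_eq_zeroE)
  have c0: "c \<noteq> 0" using h0 hc by simp
  have "qe = monom 1 e * smult c Q" using qe hc by (simp add: Q_def algebra_simps)
  then have "coeff qe (2 * u + e) = c * coeff Q (2 * u)"
    by (simp add: coeff_monom_mult)
  then show ?thesis using c0 sg by auto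
qed


lemma neg1_pow_diff: "j \<le> (k::nat) \<Longrightarrow> (-1::real)^j * (-1)^k = (-1)^(k-j)"
proof -
  assume "j \<le> k"
  then have "(-1::real)^k = (-1)^(k-j) * (-1)^j" by (simp add: power_add[symmetric])
  then have "(-1::real)^j * (-1)^k = (-1)^(k-j) * ((-1)^j * (-1)^j)" by (simp add: algebra_simps)
  also have "(-1::real)^j * (-1)^j = 1" by (simp add: power_add[symmetric])
  finally show ?thesis by simp
qed

lemma markov_nodes:
  assumes k1: "1 \<le> k" and lk: "l \<le> k" and ev: "even (k - l)" and dp: "degree p \<le> k"
    and bd: "\<forall>j\<le>k. \<bar>poly p (nd k j)\<bar> \<le> 1"
  shows "\<bar>coeff p l\<bar> \<le> \<bar>coeff (cheb k) l\<bar>"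
proof (rule ccontr)
  assume "\<not> ?thesis"
  then have gt: "\<bar>coeff (cheb k) l\<bar> < \<bar>coeff p l\<bar>" by simp
  define a where "a = coeff p l"
  define c where "c = coeff (cheb k) l"
  have a0: "a \<noteq> 0" using gt by (auto simp: a_def)
  define lam where "lam = c / a"
  have lam1: "\<bar>lam\<bar> < 1" using gt a0 by (simp add: lam_def a_def c_def abs_divide)
  define q where "q = cheb k - smult lam p"
  have dq: "degree q \<le> k"
    unfolding q_def using cheb_degree[of k] dp
    by (meson degree_diff_le degree_smult_le order_trans)
  have cq: "coeff q l = 0" using a0 by (simp add: q_def lam_def a_def c_def)
  have sq: "(-1)^j * poly q (nd k j) > 0" if "j \<le> k" for j
  proof -
    have "\<bar>(-1)^j * poly p (nd k j)\<bar> \<le> 1" using bd that by (simp add: abs_mult)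
    then have "\<bar>lam * ((-1)^j * poly p (nd k j))\<bar> < 1"
    proof -
      have "\<bar>lam\<bar> * \<bar>(-1)^j * poly p (nd k j)\<bar> \<le> \<bar>lam\<bar>"
        by (rule mult_left_le) (use \<open>\<bar>(-1)^j * poly p (nd k j)\<bar> \<le> 1\<close> in simp_all)
      then show ?thesis using lam1 by (simp add: abs_mult)
    qed
    moreover have "(-1)^j * poly q (nd k j) = 1 - lam * ((-1)^j * poly p (nd k j))"
    proof -
      have jj: "(-1::real)^j * (-1)^j = 1" by (simp add: power_add[symmetric])
      have "(-1)^j * poly q (nd k j) = (-1)^j * (-1)^j - lam * ((-1)^j * poly p (nd k j))"
        by (simp add: q_def cheb_nd[OF k1] right_diff_distrib mult.left_commute)
      then show ?thesis using jj by simp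
    qed
    ultimately show ?thesis by linarith
  qed
  define qe where "qe = (\<Sum>i\<le>k. monom (if even (k - i) then coeff q i else 0) i)"
  have coeff_qe: "coeff qe i = (if i \<le> k \<and> even (k - i) then coeff q i else 0)" for i
    by (simp add: qe_def coeff_sum coeff_monom)
  have pq: "poly q x = (\<Sum>i\<le>k. coeff q i * x ^ i)" for x
  proof -
    have "poly q x = poly (\<Sum>i\<le>k. monom (coeff q i) i) x" using poly_as_sum_of_monoms'[OF dq] by simp
    then show ?thesis by (simp add: poly_sum poly_monom)
  qed
  have poly_qe: "poly qe x = (poly q x + (-1)^k * poly q (-x)) / 2" for x
  proof -
    have "poly qe x = (\<Sum>i\<le>k. (if even (k - i) then coeff q i else 0) * x ^ i)"
      by (simp add: qe_def poly_sum poly_monom)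
    also have "\<dots> = (\<Sum>i\<le>k. (coeff q i * x ^ i + (-1)^k * (coeff q i * (-x) ^ i)) / 2)"
    proof (rule sum.cong)
      fix i assume "i \<in> {..k}"
      then have ik: "i \<le> k" by simp
      have "(-1::real)^k * (-x)^i = (-1)^i * (-1)^k * x^i"
        using power_minus[of x i] by (simp add: mult_ac)
      also have "\<dots> = (-1)^(k-i) * x^i" using neg1_pow_diff[OF ik] by simp
      finally have e: "(-1::real)^k * (-x)^i = (-1)^(k-i) * x^i" .
      show "(if even (k - i) then coeff q i else 0) * x ^ i = (coeff q i * x ^ i + (-1)^k * (coeff q i * (-x) ^ i)) / 2"
        by (cases "even (k - i)") (simp_all add: e algebra_simps)
    qed simp
    also have "\<dots> = (poly q x + (-1)^k * poly q (-x)) / 2"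
      by (simp add: pq sum_divide_distrib sum.distrib sum_distrib_left add_divide_distrib)
    finally show ?thesis .
  qed
  have kk: "(-1::real)^k * (-1)^k = 1" by (simp add: power_add[symmetric])
  have qe_neg: "poly qe (-x) = (-1)^k * poly qe x" for x
  proof -
    have "(-1)^k * poly qe x = ((-1)^k * poly q x + ((-1)^k * (-1)^k) * poly q (-x)) / 2"
      by (simp add: poly_qe algebra_simps)
    then show ?thesis using kk by (simp add: poly_qe algebra_simps)
  qed
  have sqe: "(-1)^j * poly qe (nd k j) > 0" if "j \<le> k" for j
  proof -
    have "(-1)^j * poly qe (nd k j) = ((-1)^j * poly q (nd k j) + ((-1)^j * (-1)^k) * poly q (nd k (k - j))) / 2"
      using nd_sym[OF k1 that] by (simp add: poly_qe algebra_simps)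
    also have "\<dots> = ((-1)^j * poly q (nd k j) + (-1)^(k-j) * poly q (nd k (k - j))) / 2"
      using neg1_pow_diff[OF that] by simp
    finally show ?thesis using sq[OF that] sq[of "k - j"] by simp
  qed
  have cqe: "coeff qe l = 0" using coeff_qe cq by simp
  have dqe: "degree qe \<le> k"
    unfolding qe_def by (rule degree_sum_le) (auto intro: order_trans[OF degree_monom_le])
  have qe0: "qe \<noteq> 0" using sqe[of 0] by auto
  define m where "m = k div 2"
  define e where "e = k mod 2"
  have roots: "\<exists>y. nd k (Suc j) < y \<and> y < nd k j \<and> poly qe y = 0" if "j < m" for j
  proof -
    have j: "Suc j \<le> k" using that by (simp add: m_def)
    have lt: "nd k (Suc j) < nd k j" using nd_mono[OF k1 _ j] by simp
    have A: "(-1)^(Suc j) * poly qe (nd k (Suc j)) > 0" using sqe[OF j] .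
    have B: "(-1)^j * poly qe (nd k j) > 0" using sqe j by simp
    have jj: "(-1::real)^j * (-1)^j = 1" by (simp add: power_add[symmetric])
    have "((-1)^(Suc j) * poly qe (nd k (Suc j))) * ((-1)^j * poly qe (nd k j))
        = - ((-1)^j * (-1)^j) * (poly qe (nd k (Suc j)) * poly qe (nd k j))" by (simp add: algebra_simps)
    then have "((-1)^(Suc j) * poly qe (nd k (Suc j))) * ((-1)^j * poly qe (nd k j))
        = - (poly qe (nd k (Suc j)) * poly qe (nd k j))" using jj by simp
    then have "poly qe (nd k (Suc j)) * poly qe (nd k j) < 0"
      using mult_pos_pos[OF A B] by linarith
    from poly_IVT[OF lt this] show ?thesis by blast
  qed
  have "\<forall>j. \<exists>y. j < m \<longrightarrow> nd k (Suc j) < y \<and> y < nd k j \<and> poly qe y = 0"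
    using roots by blast
  then obtain y where y: "\<And>j. j < m \<Longrightarrow> nd k (Suc j) < y j \<and> y j < nd k j \<and> poly qe (y j) = 0"
    by metis
  have ypos: "\<forall>j<m. y j > 0"
  proof (intro allI impI)
    fix j assume j: "j < m"
    have "0 \<le> nd k (Suc j)" using j k1 by (intro nd_nonneg) (auto simp: m_def)
    then show "y j > 0" using y[OF j] by linarith
  qed
  have ylt: "y j < y i" if "i < j" "j < m" for i j
  proof -
    have "nd k j \<le> nd k (Suc i)"
    proof (cases "j = Suc i")
      case False
      then have "Suc i < j" using that by simp
      moreover have "j \<le> k" using that by (simp add: m_def)
      ultimately show ?thesis using nd_mono[OF k1, of "Suc i" j] by simp
    qed simp
    then show ?thesis using y[of j] y[of i] that by force
  qed
  have yinj: "inj_on y {..<m}"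
    unfolding inj_on_def by (metis lessThan_iff linorder_neqE_nat ylt order_less_irrefl)
  have yroots: "\<forall>i<m. poly qe (y i) = 0 \<and> poly qe (- y i) = 0"
    using y qe_neg by simp
  define Q where "Q = (\<Prod>j<m. [: - ((y j)^2), 0, 1::real:])"
  have "Q dvd qe" unfolding Q_def by (rule factor_pairs[OF ypos yinj yroots])
  then obtain h where h: "qe = Q * h" by blast
  have "\<exists>h'. qe = Q * (monom 1 e * h')"
  proof (cases "e = 0")
    case True then show ?thesis using h by simp
  next
    case False
    then have e1: "e = 1" and ko: "odd k" by (auto simp: e_def)
    have "poly qe 0 = 0" using qe_neg[of 0] ko by simp
    moreover have "poly Q 0 \<noteq> 0" using ypos by (simp add: Q_def poly_prod) (metis lessThan_iff less_irrefl)
    ultimately have "poly h 0 = 0" using h by (simp add: poly_mult)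
    then obtain h' where "h = [:- 0, 1:] * h'" using poly_eq_0_iff_dvd by blast
    moreover have "monom (1::real) 1 = [:0, 1:]" by (simp add: monom_Suc)
    ultimately show ?thesis using h e1 by auto
  qed
  then obtain h' where h': "qe = Q * (monom 1 e * h')" by blast
  have km: "k = 2 * m + e" by (simp add: m_def e_def)
  have le: "l = 2 * (l div 2) + e" using ev lk unfolding e_def
    by presburger
  have ld: "l div 2 \<le> m" using lk by (simp add: m_def div_le_mono)
  have "coeff qe (2 * (l div 2) + e) \<noteq> 0"
    using final_coeff[OF ypos h'[unfolded Q_def] _ qe0 ld] dqe km by simp
  then show False using cqe le by simp
qed


definition good_meas :: "nat \<Rightarrow> nat \<Rightarrow> real \<Rightarrow> nat \<Rightarrow> (nat \<Rightarrow> real) \<Rightarrow> (nat \<Rightarrow> real) \<Rightarrow> bool" where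
  "good_meas k l B N w t \<longleftrightarrow> (\<forall>j<N. \<bar>t j\<bar> \<le> 1) \<and>
     (\<forall>r\<le>k. (\<Sum>j<N. w j * t j ^ r) = (if r = l then 1 else 0)) \<and> (\<Sum>j<N. \<bar>w j\<bar>) \<le> B"

lemma measure_even:
  assumes lk: "l \<le> k" and ev: "even (k - l)"
  shows "\<exists>N w t. good_meas k l \<bar>coeff (cheb k) l\<bar> N w t"
proof (cases "k = 0")
  case True
  then have "l = 0" using lk by simp
  then have "good_meas k l \<bar>coeff (cheb k) l\<bar> 1 (\<lambda>_. 1) (\<lambda>_. 0)"
    using True by (simp add: good_meas_def)
  then show ?thesis by blast
next
  case False
  then have k1: "1 \<le> k" by simp
  have inj: "inj_on (nd k) {..k}" by (rule nd_inj[OF k1])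
  define w where "w j = coeff (lag (nd k) k j) l" for j
  have mom: "(\<Sum>j<Suc k. w j * nd k j ^ r) = (if r = l then 1 else 0)" if r: "r \<le> k" for r
  proof -
    have "degree (monom (1::real) r) \<le> k" using r by (simp add: degree_monom_eq)
    from interp[OF inj this]
    have "coeff (monom (1::real) r) l = coeff (\<Sum>j\<le>k. smult (poly (monom 1 r) (nd k j)) (lag (nd k) k j)) l"
      by simp
    then show ?thesis
      by (simp add: coeff_sum poly_monom w_def lessThan_Suc_atMost coeff_monom mult.commute)
  qed
  define p where "p = (\<Sum>j\<le>k. smult (sgn (w j)) (lag (nd k) k j))"
  have dp: "degree p \<le> k"
    unfolding p_def by (rule degree_sum_le) (simp, meson atMost_iff degree_lag degree_smult_le order_trans)
  have pv: "poly p (nd k i) = sgn (w i)" if "i \<le> k" for i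
  proof -
    have "poly p (nd k i) = (\<Sum>j\<le>k. sgn (w j) * (if i = j then 1 else 0))"
      by (simp add: p_def poly_sum poly_lag_node[OF inj _ that])
    also have "\<dots> = sgn (w i)" using that by (simp add: if_distrib cong: if_cong)
    finally show ?thesis .
  qed
  have bd: "\<forall>j\<le>k. \<bar>poly p (nd k j)\<bar> \<le> 1" using pv by (simp add: abs_sgn_eq)
  have cp: "coeff p l = (\<Sum>j<Suc k. \<bar>w j\<bar>)"
    by (simp add: p_def coeff_sum w_def lessThan_Suc_atMost abs_sgn mult.commute)
  have "\<bar>coeff p l\<bar> \<le> \<bar>coeff (cheb k) l\<bar>" by (rule markov_nodes[OF k1 lk ev dp bd])
  then have "(\<Sum>j<Suc k. \<bar>w j\<bar>) \<le> \<bar>coeff (cheb k) l\<bar>" using cp by simp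
  then have "good_meas k l \<bar>coeff (cheb k) l\<bar> (Suc k) w (nd k)"
    using mom nd_abs by (simp add: good_meas_def)
  then show ?thesis by blast
qed

lemma measure_tilde:
  assumes lk: "l \<le> k"
  shows "\<exists>N w t. good_meas k l \<bar>cheb_coeff_tilde k l\<bar> N w t"
proof (cases "even (k - l)")
  case True
  then show ?thesis using measure_even[OF lk True] by (simp add: cheb_coeff_tilde_def cheb_coeff_def)
next
  case False
  then have lk1: "l \<le> k - 1" and ev: "even (k - 1 - l)" and k1: "1 \<le> k" using lk
    by (auto, presburger+)
  obtain N w t where g: "good_meas (k - 1) l \<bar>coeff (cheb (k - 1)) l\<bar> N w t"
    using measure_even[OF lk1 ev] by blast
  define w' where "w' j = (if j < N then w j / 2 else (-1)^l * w (j - N) / 2)" for j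
  define t' where "t' j = (if j < N then t j else - t (j - N))" for j
  have split: "(\<Sum>j<N + N. f j) = (\<Sum>j<N. f j) + (\<Sum>j<N. f (j + N))" for f :: "nat \<Rightarrow> real"
  proof -
    have "(\<Sum>j<N + N. f j) = (\<Sum>j\<in>{0..<N}. f j) + (\<Sum>j\<in>{N..<N+N}. f j)"
      by (simp add: atLeast0LessThan[symmetric] sum.atLeastLessThan_concat)
    also have "(\<Sum>j\<in>{N..<N+N}. f j) = (\<Sum>j\<in>{0..<N}. f (j + N))"
      using sum.shift_bounds_nat_ivl[of f 0 N N] by simp
    finally show ?thesis by (simp add: atLeast0LessThan)
  qed
  have t1: "\<forall>j<N + N. \<bar>t' j\<bar> \<le> 1" using g by (auto simp: good_meas_def t'_def)
  have mom: "(\<Sum>j<N + N. w' j * t' j ^ r) = (if r = l then 1 else 0)" if r: "r \<le> k" for r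
  proof -
    have "(\<Sum>j<N + N. w' j * t' j ^ r) = (\<Sum>j<N. w j * t j ^ r) * ((1 + (-1)^l * (-1)^r) / 2)"
      by (simp add: split w'_def t'_def power_minus[of "t _" r])
        (simp add: sum.distrib sum_divide_distrib sum_distrib_left algebra_simps)
    also have "\<dots> = (if r = l then 1 else 0)"
    proof (cases "r = k")
      case True
      then have "odd (l + r)" using False lk by presburger
      then have "(-1::real)^l * (-1)^r = -1" by (simp add: power_add[symmetric])
      then show ?thesis using True lk False by auto
    next
      case rk: False
      then have "r \<le> k - 1" using r by simp
      then have "(\<Sum>j<N. w j * t j ^ r) = (if r = l then 1 else 0)" using g by (simp add: good_meas_def)
      moreover have "(-1::real)^l * (-1)^l = 1" by (simp add: power_add[symmetric])
      ultimately show ?thesis by auto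
    qed
    finally show ?thesis .
  qed
  have tv: "(\<Sum>j<N + N. \<bar>w' j\<bar>) = (\<Sum>j<N. \<bar>w j\<bar>)"
    by (simp add: split w'_def abs_mult sum.distrib[symmetric])
  have "good_meas k l \<bar>cheb_coeff_tilde k l\<bar> (N + N) w' t'"
    using t1 mom tv g False by (simp add: good_meas_def cheb_coeff_tilde_def cheb_coeff_def)
  then show ?thesis by blast
qed


lemma prod_expand:
  "(\<Prod>i\<in>{0..<n}. 1 + t * x i) = (\<Sum>S\<in>Pow {0..<n}. t ^ card S * walsh S x)"
proof -
  have "(\<Prod>i\<in>{0..<n}. t * x i + 1) = (\<Sum>S\<in>Pow {0..<n}. (\<Prod>i\<in>S. t * x i) * (\<Prod>i\<in>{0..<n}-S. 1))"
    by (rule prod_add) simp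
  also have "\<dots> = (\<Sum>S\<in>Pow {0..<n}. t ^ card S * walsh S x)"
    by (simp add: walsh_def prod.distrib)
  finally show ?thesis by (simp add: add.commute)
qed

lemma esym_expand:
  "esym n l x = (\<Sum>S\<in>Pow {0..<n}. (if card S = l then 1 else 0) * walsh S x)"
proof -
  have "(\<Sum>S\<in>Pow {0..<n}. (if card S = l then 1 else 0) * walsh S x)
      = (\<Sum>S\<in>Pow {0..<n}. if card S = l then walsh S x else 0)"
    by (rule sum.cong) auto
  also have "\<dots> = (\<Sum>S\<in>{S \<in> Pow {0..<n}. card S = l}. walsh S x)"
    by (rule sum.inter_filter[symmetric]) simp
  also have "\<dots> = esym n l x"
  proof (cases "l = 0")
    case True
    have "{S \<in> Pow {0..<n}. card S = l} = {{}}"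
      using True by (auto dest: finite_subset[OF _ finite_atLeastLessThan])
    then show ?thesis using True by (simp add: esym_def walsh_def)
  next
    case False
    have "{S \<in> Pow {0..<n}. card S = l} = {S. S \<subseteq> {0..<n} \<and> card S = l}" by auto
    then show ?thesis using False by (simp add: esym_def)
  qed
  finally show ?thesis by simp
qed

lemma sum_prod_cube: "(\<Sum>x\<in>cube n. \<Prod>i\<in>{0..<n}. 1 + t * x i) = 2 ^ n"
proof -
  have "(\<Prod>i\<in>{0..<n}. \<Sum>v\<in>{-1, 1::real}. 1 + t * v) = (\<Sum>x\<in>cube n. \<Prod>i\<in>{0..<n}. 1 + t * x i)"
    unfolding cube_def by (rule prod_sum_PiE) auto
  moreover have "(\<Prod>i\<in>{0..<n}. \<Sum>v\<in>{-1, 1::real}. 1 + t * v) = 2 ^ n" by simp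
  ultimately show ?thesis by simp
qed

lemma prod_nonneg_cube:
  assumes "x \<in> cube n" "\<bar>t\<bar> \<le> 1"
  shows "0 \<le> (\<Prod>i\<in>{0..<n}. 1 + t * x i)"
proof (rule prod_nonneg)
  fix i assume "i \<in> {0..<n}"
  then have "x i \<in> {-1, 1}" using assms(1) by (auto simp: cube_def)
  then show "0 \<le> 1 + t * x i" using assms(2) by auto
qed

lemma L1_prod:
  assumes "\<bar>t\<bar> \<le> 1"
  shows "(\<Sum>x\<in>cube n. \<bar>\<Prod>i\<in>{0..<n}. 1 + t * x i\<bar>) = 2 ^ n"
  using sum_prod_cube[where n=n and t=t] prod_nonneg_cube[OF _ assms] by simp


theorem theorem1p4:
  fixes n k d :: nat and \<alpha> :: "nat \<Rightarrow> real"
  assumes "d \<le> k" and "k \<le> n"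
  shows "(INF g\<in>Pgt n k. L1norm n (\<lambda>x. (\<Sum>l\<le>d. \<alpha> l * esym n l x) - g x))
           \<le> (\<Sum>l\<le>d. \<bar>\<alpha> l\<bar> * \<bar>cheb_coeff_tilde k l\<bar>)"
proof -
  have "\<forall>l. \<exists>N w t. l \<le> k \<longrightarrow> good_meas k l \<bar>cheb_coeff_tilde k l\<bar> N w t"
    using measure_tilde by blast
  then obtain N W T where G: "\<And>l. l \<le> k \<Longrightarrow> good_meas k l \<bar>cheb_coeff_tilde k l\<bar> (N l) (W l) (T l)"
    by metis
  define P where "P l j x = (\<Prod>i\<in>{0..<n}. 1 + T l j * x i)" for l j and x :: "nat \<Rightarrow> real"
  define phi where "phi x = (\<Sum>l\<le>d. \<alpha> l * (\<Sum>j<N l. W l j * P l j x))" for x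
  define F where "F x = (\<Sum>l\<le>d. \<alpha> l * esym n l x)" for x
  define g where "g x = F x - phi x" for x
  define b where "b r = (\<Sum>l\<le>d. \<alpha> l * ((if r = l then 1 else 0) - (\<Sum>j<N l. W l j * T l j ^ r)))" for r
  have ea: "(\<Sum>S\<in>Pow {0..<n}. (\<Sum>l\<le>d. \<alpha> l * (if card S = l then 1 else 0)) * walsh S x) = F x" for x
    by (simp add: F_def esym_expand sum_distrib_left sum_distrib_right mult.assoc sum.swap[of _ "Pow _"])
  have eb: "(\<Sum>S\<in>Pow {0..<n}. (\<Sum>l\<le>d. \<alpha> l * (\<Sum>j<N l. W l j * T l j ^ card S)) * walsh S x) = phi x" for x
    by (simp add: phi_def P_def prod_expand sum_distrib_left sum_distrib_right mult.assoc sum.swap[of _ "Pow _"])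
  have gexp: "g x = (\<Sum>S\<in>Pow {0..<n}. b (card S) * walsh S x)" for x
  proof -
    have "(\<Sum>S\<in>Pow {0..<n}. b (card S) * walsh S x)
        = (\<Sum>S\<in>Pow {0..<n}. (\<Sum>l\<le>d. \<alpha> l * (if card S = l then 1 else 0)) * walsh S x
              - (\<Sum>l\<le>d. \<alpha> l * (\<Sum>j<N l. W l j * T l j ^ card S)) * walsh S x)"
      by (rule sum.cong) (simp_all add: b_def right_diff_distrib left_diff_distrib sum_subtractf)
    also have "\<dots> = F x - phi x" by (simp add: sum_subtractf ea eb)
    finally show ?thesis by (simp add: g_def)
  qed
  have b0: "b r = 0" if "r \<le> k" for r
  proof -
    have "\<alpha> l * ((if r = l then 1 else 0) - (\<Sum>j<N l. W l j * T l j ^ r)) = 0" if "l \<le> d" for l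
      using G[of l] \<open>r \<le> k\<close> that assms(1) by (simp add: good_meas_def)
    note * = this
    show ?thesis unfolding b_def by (rule sum.neutral) (use * in auto)
  qed
  have gP: "g \<in> Pgt n k"
    unfolding Pgt_def
  proof (intro CollectI exI ballI)
    fix x :: "nat \<Rightarrow> real"
    have "g x = (\<Sum>S\<in>Pow {0..<n}. b (card S) * walsh S x)" by (rule gexp)
    also have "\<dots> = (\<Sum>S\<in>{S. S \<subseteq> {0..<n} \<and> k < card S}. b (card S) * walsh S x)"
      by (rule sum.mono_neutral_right) (auto, metis b0 not_less)
    finally show "g x = (\<Sum>S\<in>{S. S \<subseteq> {0..<n} \<and> k < card S}. b (card S) * walsh S x)" .
  qed
  have Fg: "(\<lambda>x. (\<Sum>l\<le>d. \<alpha> l * esym n l x) - g x) = phi"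
    by (rule ext) (simp add: g_def F_def)
  have Pabs: "(\<Sum>x\<in>cube n. \<bar>P l j x\<bar>) = 2 ^ n" if "l \<le> d" "j < N l" for l j
  proof -
    have "\<bar>T l j\<bar> \<le> 1" using G[of l] that assms(1) by (simp add: good_meas_def)
    then show ?thesis unfolding P_def by (rule L1_prod)
  qed
  have "(\<Sum>x\<in>cube n. \<bar>phi x\<bar>) \<le> (\<Sum>x\<in>cube n. \<Sum>l\<le>d. \<bar>\<alpha> l\<bar> * (\<Sum>j<N l. \<bar>W l j\<bar> * \<bar>P l j x\<bar>))"
  proof (rule sum_mono)
    fix x
    have "\<bar>phi x\<bar> \<le> (\<Sum>l\<le>d. \<bar>\<alpha> l * (\<Sum>j<N l. W l j * P l j x)\<bar>)"
      unfolding phi_def by (rule sum_abs)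
    also have "\<dots> \<le> (\<Sum>l\<le>d. \<bar>\<alpha> l\<bar> * (\<Sum>j<N l. \<bar>W l j\<bar> * \<bar>P l j x\<bar>))"
    proof (rule sum_mono)
      fix l
      have "\<bar>\<Sum>j<N l. W l j * P l j x\<bar> \<le> (\<Sum>j<N l. \<bar>W l j * P l j x\<bar>)" by (rule sum_abs)
      then show "\<bar>\<alpha> l * (\<Sum>j<N l. W l j * P l j x)\<bar> \<le> \<bar>\<alpha> l\<bar> * (\<Sum>j<N l. \<bar>W l j\<bar> * \<bar>P l j x\<bar>)"
        by (simp add: abs_mult mult_left_mono)
    qed
    finally show "\<bar>phi x\<bar> \<le> (\<Sum>l\<le>d. \<bar>\<alpha> l\<bar> * (\<Sum>j<N l. \<bar>W l j\<bar> * \<bar>P l j x\<bar>))" .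
  qed
  also have "\<dots> = (\<Sum>l\<le>d. \<bar>\<alpha> l\<bar> * (\<Sum>j<N l. \<bar>W l j\<bar> * (\<Sum>x\<in>cube n. \<bar>P l j x\<bar>)))"
    by (simp add: sum_distrib_left sum.swap[of _ "cube n"])
  also have "\<dots> = (\<Sum>l\<le>d. \<bar>\<alpha> l\<bar> * (\<Sum>j<N l. \<bar>W l j\<bar>)) * 2 ^ n"
    by (simp add: Pabs sum_distrib_right mult.assoc)
  also have "\<dots> \<le> (\<Sum>l\<le>d. \<bar>\<alpha> l\<bar> * \<bar>cheb_coeff_tilde k l\<bar>) * 2 ^ n"
  proof -
    have "(\<Sum>j<N l. \<bar>W l j\<bar>) \<le> \<bar>cheb_coeff_tilde k l\<bar>" if "l \<in> {..d}" for l
      using G[of l] that assms(1) by (simp add: good_meas_def)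
    then have "(\<Sum>l\<le>d. \<bar>\<alpha> l\<bar> * (\<Sum>j<N l. \<bar>W l j\<bar>)) \<le> (\<Sum>l\<le>d. \<bar>\<alpha> l\<bar> * \<bar>cheb_coeff_tilde k l\<bar>)"
      by (intro sum_mono mult_left_mono) auto
    then show ?thesis by simp
  qed
  finally have L: "L1norm n phi \<le> (\<Sum>l\<le>d. \<bar>\<alpha> l\<bar> * \<bar>cheb_coeff_tilde k l\<bar>)"
    by (simp add: L1norm_def divide_le_eq)
  have bdd: "bdd_below ((\<lambda>g. L1norm n (\<lambda>x. (\<Sum>l\<le>d. \<alpha> l * esym n l x) - g x)) ` Pgt n k)"
    by (rule bdd_belowI[of _ 0]) (auto simp: L1norm_def intro: sum_nonneg divide_nonneg_pos)
  have "(INF g\<in>Pgt n k. L1norm n (\<lambda>x. (\<Sum>l\<le>d. \<alpha> l * esym n l x) - g x))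
        \<le> L1norm n (\<lambda>x. (\<Sum>l\<le>d. \<alpha> l * esym n l x) - g x)"
    by (rule cINF_lower[OF bdd gP])
  also have "\<dots> = L1norm n phi" by (simp only: Fg)
  finally show ?thesis using L by linarith
qed

end
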